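(* Let $n>1$ be odd and $D_{2n}=\langle s,t\mid s^2=t^n=1,\ sts=t^{-1}\rangle$. Let $(u_i)_{i\in[1,m]}$ be a system of equations over $D_{2n}$, each $u_i$ a word over the constants $s,t,t^{-1}$ and variables $X_1^{\pm1},\dots,X_k^{\pm1}$. Let $w_i$ be the word obtained from $u_i$ by replacing each $X_j$ by $Y_{0,j}(Y_{1,j}tY_{1,j}^{-1})(Y_{2,j}tY_{2,j}^{-1})\cdots(Y_{n,j}tY_{n,j}^{-1})$ and each $X_j^{-1}$ by the formal inverse of that word, and then replacing $s,t,t^{\pm1}$ by letters $a,d,d^{\pm1}$ and each $Y_{i,j}^{\pm1}$ by $g_{i,j}^{\pm1}$. Let $G_o$ be the group with generators $a,d$ and $g_{i,j}$ ($i\in[0,n]$, $j\in[1,k]$) and relators $a^2$, $d^n$, $adad$, $w_i$ ($i\in[1,m]$), $[g,g']$, $[g,a]$, $g^2$ for all $g,g'\in\{g_{i,j}\}$. Then there is a surjective homomorphism $G_o\to D_{2n}$ if and only if the system $(u_i)_{i\in[1,m]}$ has a solution in $D_{2n}$.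
   Context: A solution of a system of equations over a group is an assignment of group elements $h_j$ to the variables $X_j$ (and $h_j^{-1}$ to $X_j^{-1}$) under which every equation evaluates to the identity. $[x,y]=xyx^{-1}y^{-1}$. *)

theory Defs
  imports "HOL-Algebra.Group"
begin

text \<open>A letter is a generator with a sign: (x, True) stands for x, (x, False) for x^-1.\<close>
type_synonym 'g word = "('g \<times> bool) list"

definition words_on :: "'g set \<Rightarrow> 'g word set" where
  "words_on X = {w. \<forall>l \<in> set w. fst l \<in> X}"

definition word_inv :: "'g word \<Rightarrow> 'g word" where
  "word_inv w = rev (map (\<lambda>(x, b). (x, \<not> b)) w)"

inductive_set pres_eq :: "'g set \<Rightarrow> 'g word set \<Rightarrow> ('g word \<times> 'g word) set"
  for X :: "'g set" and R :: "'g word set" where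
  refl: "w \<in> words_on X \<Longrightarrow> (w, w) \<in> pres_eq X R"
| sym: "(v, w) \<in> pres_eq X R \<Longrightarrow> (w, v) \<in> pres_eq X R"
| trans: "(u, v) \<in> pres_eq X R \<Longrightarrow> (v, w) \<in> pres_eq X R \<Longrightarrow> (u, w) \<in> pres_eq X R"
| cancel: "u \<in> words_on X \<Longrightarrow> v \<in> words_on X \<Longrightarrow> x \<in> X \<Longrightarrow>
     (u @ [(x, b), (x, \<not> b)] @ v, u @ v) \<in> pres_eq X R"
| rel: "u \<in> words_on X \<Longrightarrow> v \<in> words_on X \<Longrightarrow> r \<in> R \<Longrightarrow> r \<in> words_on X \<Longrightarrow>
     (u @ r @ v, u @ v) \<in> pres_eq X R"

definition presented_group :: "'g set \<Rightarrow> 'g word set \<Rightarrow> ('g word set) monoid" where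
  "presented_group X R =
     \<lparr> carrier = words_on X // pres_eq X R,
       mult = (\<lambda>A B. \<Union>a\<in>A. \<Union>b\<in>B. pres_eq X R `` {a @ b}),
       one = pres_eq X R `` {[]} \<rparr>"

definition word_eval :: "('a, 'm) monoid_scheme \<Rightarrow> ('g \<Rightarrow> 'a) \<Rightarrow> 'g word \<Rightarrow> 'a" where
  "word_eval G f w =
     foldr (\<lambda>(x, b) acc. (if b then f x else inv\<^bsub>G\<^esub> (f x)) \<otimes>\<^bsub>G\<^esub> acc) w \<one>\<^bsub>G\<^esub>"

datatype dgen = S | T

definition dihedral :: "nat \<Rightarrow> (dgen word set) monoid" where
  "dihedral n = presented_group {S, T}
     {[(S, True), (S, True)], replicate n (T, True),
      [(S, True), (T, True), (S, True), (T, True)]}"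

definition dconst :: "nat \<Rightarrow> dgen \<Rightarrow> dgen word set" where
  "dconst n c = pres_eq {S, T} {[(S, True), (S, True)], replicate n (T, True),
      [(S, True), (T, True), (S, True), (T, True)]} `` {[(c, True)]}"

text \<open>Equations: words over letters Inl c (constants s, t) and Inr j (variable X_j), signed.\<close>
type_synonym eqn = "(dgen + nat) word"

definition is_solution :: "nat \<Rightarrow> nat \<Rightarrow> (nat \<Rightarrow> eqn) \<Rightarrow> (nat \<Rightarrow> dgen word set) \<Rightarrow> bool" where
  "is_solution n m u h \<longleftrightarrow>
     (\<forall>i \<in> {1..m}. word_eval (dihedral n)
        (\<lambda>l. case l of Inl c \<Rightarrow> dconst n c | Inr j \<Rightarrow> h j) (u i) = \<one>\<^bsub>dihedral n\<^esub>)"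

datatype ogen = A | Dg | G nat nat

definition Xword :: "nat \<Rightarrow> nat \<Rightarrow> ogen word" where
  "Xword n j = (G 0 j, True) #
     concat (map (\<lambda>i. [(G i j, True), (Dg, True), (G i j, False)]) [1..<n+1])"

fun tr_letter :: "nat \<Rightarrow> (dgen + nat) \<times> bool \<Rightarrow> ogen word" where
  "tr_letter n (Inl S, b) = [(A, b)]"
| "tr_letter n (Inl T, b) = [(Dg, b)]"
| "tr_letter n (Inr j, True) = Xword n j"
| "tr_letter n (Inr j, False) = word_inv (Xword n j)"

definition tr_word :: "nat \<Rightarrow> eqn \<Rightarrow> ogen word" where
  "tr_word n u = concat (map (tr_letter n) u)"

definition commw :: "'g \<Rightarrow> 'g \<Rightarrow> 'g word" where
  "commw x y = [(x, True), (y, True), (x, False), (y, False)]"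

definition Ggens :: "nat \<Rightarrow> nat \<Rightarrow> ogen set" where
  "Ggens n k = {G i j | i j. i \<le> n \<and> 1 \<le> j \<and> j \<le> k}"

definition Go :: "nat \<Rightarrow> nat \<Rightarrow> nat \<Rightarrow> (nat \<Rightarrow> eqn) \<Rightarrow> (ogen word set) monoid" where
  "Go n k m u = presented_group ({A, Dg} \<union> Ggens n k)
     ({[(A, True), (A, True)], replicate n (Dg, True),
       [(A, True), (Dg, True), (A, True), (Dg, True)]}
      \<union> {tr_word n (u i) | i. i \<in> {1..m}}
      \<union> {commw g g' | g g'. g \<in> Ggens n k \<and> g' \<in> Ggens n k}
      \<union> {commw g A | g. g \<in> Ggens n k}
      \<union> {[(g, True), (g, True)] | g. g \<in> Ggens n k})"

end

theory Submission
  imports Defs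
begin

lemma words_on_Nil[simp]: "[] \<in> words_on X"
  by (simp add: words_on_def)
lemma words_on_Cons[simp]: "(l # w \<in> words_on X) = (fst l \<in> X \<and> w \<in> words_on X)"
  by (auto simp add: words_on_def)
lemma words_on_append[simp]: "(u @ w \<in> words_on X) = (u \<in> words_on X \<and> w \<in> words_on X)"
  by (auto simp add: words_on_def)
lemma words_on_word_inv[simp]: "(word_inv w \<in> words_on X) = (w \<in> words_on X)"
  by (auto simp add: words_on_def word_inv_def)

lemma word_inv_Nil[simp]: "word_inv [] = []" by (simp add: word_inv_def)
lemma word_inv_Cons[simp]: "word_inv ((x,b) # w) = word_inv w @ [(x, \<not>b)]"
  by (simp add: word_inv_def)
lemma word_inv_append[simp]: "word_inv (u @ w) = word_inv w @ word_inv u"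
  by (simp add: word_inv_def)
lemma word_inv_inv[simp]: "word_inv (word_inv w) = w"
  by (induct w) (auto simp add: word_inv_def)

lemma pres_eq_words: "(u, v) \<in> pres_eq X R \<Longrightarrow> u \<in> words_on X \<and> v \<in> words_on X"
  by (induct rule: pres_eq.induct) auto

lemma pres_eq_append_right:
  assumes "(u, v) \<in> pres_eq X R" "w \<in> words_on X"
  shows "(u @ w, v @ w) \<in> pres_eq X R"
  using assms
proof (induct rule: pres_eq.induct)
  case (refl w) then show ?case by (simp add: pres_eq.refl)
next
  case (sym v w) then show ?case by (blast intro: pres_eq.sym)
next
  case (trans u v w) then show ?case by (blast intro: pres_eq.trans)
next
  case (cancel u v x b) then show ?case using pres_eq.cancel[where u=u and v="v @ w" and x=x and b=b and X=X and R=R] by simp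
next
  case (rel u v r) then show ?case using pres_eq.rel[where u=u and v="v @ w" and r=r and X=X and R=R] by simp
qed

lemma pres_eq_append_left:
  assumes "(u, v) \<in> pres_eq X R" "w \<in> words_on X"
  shows "(w @ u, w @ v) \<in> pres_eq X R"
  using assms
proof (induct rule: pres_eq.induct)
  case (refl w) then show ?case by (simp add: pres_eq.refl)
next
  case (sym v w) then show ?case by (blast intro: pres_eq.sym)
next
  case (trans u v w) then show ?case by (blast intro: pres_eq.trans)
next
  case (cancel u v x b) then show ?case using pres_eq.cancel[where u="w @ u" and v=v and x=x and b=b and X=X and R=R] by simp
next
  case (rel u v r) then show ?case using pres_eq.rel[where u="w @ u" and v=v and r=r and X=X and R=R] by simp
qed

lemma pres_eq_append:
  assumes "(u, u') \<in> pres_eq X R" "(v, v') \<in> pres_eq X R"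
  shows "(u @ v, u' @ v') \<in> pres_eq X R"
proof -
  have "(u @ v, u' @ v) \<in> pres_eq X R"
    using assms pres_eq_words pres_eq_append_right by blast
  moreover have "(u' @ v, u' @ v') \<in> pres_eq X R"
    using assms pres_eq_words pres_eq_append_left by blast
  ultimately show ?thesis by (rule pres_eq.trans)
qed

lemma pres_eq_equiv: "equiv (words_on X) (pres_eq X R)"
  unfolding equiv_def refl_on_def sym_def trans_def
  using pres_eq_words by (auto intro: pres_eq.refl pres_eq.sym pres_eq.trans)

lemma inv_cancel_pres: "w \<in> words_on X \<Longrightarrow> (word_inv w @ w, []) \<in> pres_eq X R"
proof (induct w)
  case Nil then show ?case by (simp add: pres_eq.refl)
next
  case (Cons l w)
  obtain x b where l: "l = (x, b)" by (cases l)
  have 1: "(word_inv w @ [(x, \<not>b), (x, \<not>\<not>b)] @ w, word_inv w @ w) \<in> pres_eq X R"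
    using Cons l by (intro pres_eq.cancel) auto
  show ?case using pres_eq.trans[OF 1 Cons(1)] Cons l by simp
qed

lemma inv_cancel_pres': "w \<in> words_on X \<Longrightarrow> (w @ word_inv w, []) \<in> pres_eq X R"
  using inv_cancel_pres[of "word_inv w" X R] by simp

lemma cls_mult:
  assumes "u \<in> words_on X" "v \<in> words_on X"
  shows "mult (presented_group X R) (pres_eq X R `` {u}) (pres_eq X R `` {v}) = pres_eq X R `` {u @ v}"
proof -
  let ?E = "pres_eq X R"
  have eq: "\<And>a b. a \<in> ?E `` {u} \<Longrightarrow> b \<in> ?E `` {v} \<Longrightarrow>
     ?E `` {a @ b} = ?E `` {u @ v}"
    by (rule equiv_class_eq[OF pres_eq_equiv], rule pres_eq.sym, rule pres_eq_append) auto
  have ne: "u \<in> ?E `` {u}" "v \<in> ?E `` {v}" using assms by (auto intro: pres_eq.refl)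
  have "(\<Union>a\<in>?E `` {u}. \<Union>b\<in>?E `` {v}. ?E `` {a @ b}) = (\<Union>a\<in>?E `` {u}. \<Union>b\<in>?E `` {v}. ?E `` {u @ v})"
    using eq by (intro SUP_cong[OF HOL.refl]) auto
  also have "\<dots> = ?E `` {u @ v}" using ne by blast
  finally show ?thesis unfolding presented_group_def by simp
qed

lemma carrier_P: "carrier (presented_group X R) = words_on X // pres_eq X R"
  by (simp add: presented_group_def)
lemma one_P: "one (presented_group X R) = pres_eq X R `` {[]}"
  by (simp add: presented_group_def)

lemma cls_in_carrier: "w \<in> words_on X \<Longrightarrow> pres_eq X R `` {w} \<in> carrier (presented_group X R)"
  by (simp add: carrier_P quotientI)

lemma carrier_PE:
  assumes "C \<in> carrier (presented_group X R)"
  obtains w where "w \<in> words_on X" "C = pres_eq X R `` {w}"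
  using assms by (auto simp: carrier_P elim: quotientE)

lemma group_P: "group (presented_group X R)"
proof (rule groupI)
  fix x y assume "x \<in> carrier (presented_group X R)" "y \<in> carrier (presented_group X R)"
  then show "x \<otimes>\<^bsub>presented_group X R\<^esub> y \<in> carrier (presented_group X R)"
    by (auto elim!: carrier_PE simp: cls_mult cls_in_carrier)
next
  show "\<one>\<^bsub>presented_group X R\<^esub> \<in> carrier (presented_group X R)"
    by (simp add: one_P cls_in_carrier)
next
  fix x y z assume "x \<in> carrier (presented_group X R)" "y \<in> carrier (presented_group X R)"
    "z \<in> carrier (presented_group X R)"
  then show "x \<otimes>\<^bsub>presented_group X R\<^esub> y \<otimes>\<^bsub>presented_group X R\<^esub> z =
      x \<otimes>\<^bsub>presented_group X R\<^esub> (y \<otimes>\<^bsub>presented_group X R\<^esub> z)"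
    by (auto elim!: carrier_PE simp: cls_mult)
next
  fix x assume "x \<in> carrier (presented_group X R)"
  then show "\<one>\<^bsub>presented_group X R\<^esub> \<otimes>\<^bsub>presented_group X R\<^esub> x = x"
    by (auto elim!: carrier_PE simp: cls_mult one_P)
next
  fix x assume "x \<in> carrier (presented_group X R)"
  then obtain w where w: "w \<in> words_on X" "x = pres_eq X R `` {w}" by (rule carrier_PE)
  have "pres_eq X R `` {word_inv w} \<otimes>\<^bsub>presented_group X R\<^esub> x = \<one>\<^bsub>presented_group X R\<^esub>"
    using w by (simp add: cls_mult one_P equiv_class_eq[OF pres_eq_equiv inv_cancel_pres])
  then show "\<exists>y\<in>carrier (presented_group X R). y \<otimes>\<^bsub>presented_group X R\<^esub> x = \<one>\<^bsub>presented_group X R\<^esub>"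
    using w cls_in_carrier[of "word_inv w"] by auto
qed

lemma inv_P:
  assumes "w \<in> words_on X"
  shows "inv\<^bsub>presented_group X R\<^esub> (pres_eq X R `` {w}) = pres_eq X R `` {word_inv w}"
  using assms
  by (intro group.inv_equality[OF group_P])
     (simp_all add: cls_mult one_P equiv_class_eq[OF pres_eq_equiv inv_cancel_pres] cls_in_carrier)

lemma rel_one_P:
  assumes "r \<in> R" "r \<in> words_on X"
  shows "pres_eq X R `` {r} = \<one>\<^bsub>presented_group X R\<^esub>"
  using pres_eq.rel[where u="[]" and v="[]" and r=r and X=X and R=R] assms
  by (simp add: one_P equiv_class_eq[OF pres_eq_equiv])

lemma word_eval_Nil[simp]: "word_eval K f [] = \<one>\<^bsub>K\<^esub>"
  by (simp add: word_eval_def)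
lemma word_eval_Cons[simp]:
  "word_eval K f ((x, b) # w) = (if b then f x else inv\<^bsub>K\<^esub> (f x)) \<otimes>\<^bsub>K\<^esub> word_eval K f w"
  by (simp add: word_eval_def)

context group begin

lemma word_eval_closed:
  "\<forall>l \<in> set w. f (fst l) \<in> carrier G \<Longrightarrow> word_eval G f w \<in> carrier G"
  by (induct w) auto

lemma word_eval_append:
  "\<forall>l \<in> set u. f (fst l) \<in> carrier G \<Longrightarrow> \<forall>l \<in> set v. f (fst l) \<in> carrier G \<Longrightarrow>
   word_eval G f (u @ v) = word_eval G f u \<otimes> word_eval G f v"
  by (induct u) (auto simp: m_assoc word_eval_closed)

lemma word_eval_word_inv:
  "\<forall>l \<in> set w. f (fst l) \<in> carrier G \<Longrightarrow> word_eval G f (word_inv w) = inv (word_eval G f w)"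
proof (induct w)
  case Nil then show ?case by simp
next
  case (Cons l w)
  obtain x b where l: "l = (x, b)" by (cases l)
  have c: "\<forall>l\<in>set (word_inv w). f (fst l) \<in> carrier G"
    using Cons(2) by (auto simp: word_inv_def)
  show ?case using Cons l
    by (simp add: word_eval_append c word_eval_closed inv_mult_group)
qed

lemma word_eval_cong:
  "\<forall>l \<in> set w. f (fst l) = g (fst l) \<Longrightarrow> word_eval G f w = word_eval G g w"
  by (induct w) auto

lemma word_eval_concat:
  assumes "\<forall>l \<in> set w. (\<forall>l' \<in> set (\<tau> l). f (fst l') \<in> carrier G)
     \<and> F (fst l) \<in> carrier G
     \<and> word_eval G f (\<tau> l) = (if snd l then F (fst l) else inv (F (fst l)))"
  shows "word_eval G f (concat (map \<tau> w)) = word_eval G F w"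
  using assms
proof (induct w)
  case Nil then show ?case by simp
next
  case (Cons l w)
  obtain x b where l: "l = (x, b)" by (cases l)
  have c: "\<forall>l\<in>set (concat (map \<tau> w)). f (fst l) \<in> carrier G"
    using Cons(2) by auto
  show ?case using Cons l by (simp add: word_eval_append c)
qed

end

lemma word_eval_hom:
  assumes "group K" "group H" "h \<in> hom K H" "\<forall>l \<in> set w. f (fst l) \<in> carrier K"
  shows "h (word_eval K f w) = word_eval H (h \<circ> f) w"
proof -
  interpret group_hom K H h using assms by (simp add: group_hom_def group_hom_axioms_def)
  show ?thesis using assms(4) by (induct w) (auto simp: group.word_eval_closed[OF assms(1)])
qed

lemma word_eval_P:
  "w \<in> words_on X \<Longrightarrow>
   word_eval (presented_group X R) (\<lambda>x. pres_eq X R `` {[(x, True)]}) w = pres_eq X R `` {w}"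
proof (induct w)
  case Nil then show ?case by (simp add: one_P)
next
  case (Cons l w)
  obtain x b where l: "l = (x, b)" by (cases l)
  show ?case using Cons l
    by (auto simp: inv_P cls_mult)
qed

section \<open>von Dyck\<close>

definition lift :: "('a, 'm) monoid_scheme \<Rightarrow> ('g \<Rightarrow> 'a) \<Rightarrow> 'g word set \<Rightarrow> 'a" where
  "lift H f C = word_eval H f (SOME w. w \<in> C)"

lemma pres_eq_eval:
  assumes "group H" "\<forall>x\<in>X. f x \<in> carrier H"
    "\<forall>r\<in>R. r \<in> words_on X \<longrightarrow> word_eval H f r = \<one>\<^bsub>H\<^esub>"
    "(u, v) \<in> pres_eq X R"
  shows "word_eval H f u = word_eval H f v"
  using assms(4)
proof (induct rule: pres_eq.induct)
  case (cancel u v x b)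
  interpret H: group H by fact
  have c: "\<forall>l\<in>set w. f (fst l) \<in> carrier H" if "w \<in> words_on X" for w
    using that assms(2) by (auto simp: words_on_def)
  have fx: "f x \<in> carrier H" using cancel assms(2) by auto
  have ev: "word_eval H f v \<in> carrier H" using c cancel H.word_eval_closed by blast
  have p: "word_eval H f ((x,b) # (x,\<not>b) # v) = word_eval H f v"
    using fx ev by (cases b) (simp_all flip: H.m_assoc)
  have "word_eval H f (u @ ((x,b) # (x,\<not>b) # v)) = word_eval H f u \<otimes>\<^bsub>H\<^esub> word_eval H f ((x,b) # (x,\<not>b) # v)"
    using cancel c fx by (intro H.word_eval_append) auto
  then show ?case using cancel c p by (simp add: H.word_eval_append)
next
  case (rel u v r)
  interpret H: group H by fact
  have c: "\<forall>l\<in>set w. f (fst l) \<in> carrier H" if "w \<in> words_on X" for w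
    using that assms(2) by (auto simp: words_on_def)
  have "word_eval H f (u @ (r @ v)) = word_eval H f u \<otimes>\<^bsub>H\<^esub> word_eval H f (r @ v)"
    using rel c by (intro H.word_eval_append) auto
  also have "word_eval H f (r @ v) = word_eval H f v"
    using rel c assms(3) H.word_eval_closed[of v f] by (simp add: H.word_eval_append)
  finally show ?case using rel c by (simp add: H.word_eval_append)
qed auto

lemma lift_cls:
  assumes "group H" "\<forall>x\<in>X. f x \<in> carrier H"
    "\<forall>r\<in>R. r \<in> words_on X \<longrightarrow> word_eval H f r = \<one>\<^bsub>H\<^esub>" "w \<in> words_on X"
  shows "lift H f (pres_eq X R `` {w}) = word_eval H f w"
proof -
  have "w \<in> pres_eq X R `` {w}" using assms(4) by (auto intro: pres_eq.refl)
  then have "(SOME w'. w' \<in> pres_eq X R `` {w}) \<in> pres_eq X R `` {w}" by (rule someI)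
  then show ?thesis unfolding lift_def using pres_eq_eval[OF assms(1-3)] by (auto intro: sym)
qed

lemma lift_hom:
  assumes "group H" "\<forall>x\<in>X. f x \<in> carrier H"
    "\<forall>r\<in>R. r \<in> words_on X \<longrightarrow> word_eval H f r = \<one>\<^bsub>H\<^esub>"
  shows "lift H f \<in> hom (presented_group X R) H"
proof -
  interpret H: group H by fact
  have c: "\<forall>l\<in>set w. f (fst l) \<in> carrier H" if "w \<in> words_on X" for w
    using that assms(2) by (auto simp: words_on_def)
  show ?thesis unfolding hom_def
    by (auto elim!: carrier_PE simp: cls_mult lift_cls[OF assms] H.word_eval_closed c H.word_eval_append)
qed

lemma hom_P_cls:
  assumes "group H" "h \<in> hom (presented_group X R) H" "w \<in> words_on X"
  shows "h (pres_eq X R `` {w}) = word_eval H (\<lambda>x. h (pres_eq X R `` {[(x, True)]})) w"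
proof -
  have "h (pres_eq X R `` {w}) = h (word_eval (presented_group X R) (\<lambda>x. pres_eq X R `` {[(x, True)]}) w)"
    using word_eval_P[OF assms(3)] by simp
  also have "\<dots> = word_eval H (h \<circ> (\<lambda>x. pres_eq X R `` {[(x, True)]})) w"
    using assms by (intro word_eval_hom group_P) (auto simp: words_on_def intro!: cls_in_carrier)
  finally show ?thesis by (simp add: comp_def)
qed


declare pow_nat[simp del]

definition Dc :: "nat \<Rightarrow> (bool \<times> int) monoid" where
  "Dc n = \<lparr>carrier = {(b, r). 0 \<le> r \<and> r < int n},
     mult = (\<lambda>x y. (fst x \<noteq> fst y, ((if fst y then - snd x else snd x) + snd y) mod int n)),
     one = (False, 0)\<rparr>"

lemma carrier_Dc: "carrier (Dc n) = {(b, r). 0 \<le> r \<and> r < int n}" by (simp add: Dc_def)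
lemma one_Dc: "\<one>\<^bsub>Dc n\<^esub> = (False, 0)" by (simp add: Dc_def)
lemma mult_Dc: "(b1, r1) \<otimes>\<^bsub>Dc n\<^esub> (b2, r2) = (b1 \<noteq> b2, ((if b2 then - r1 else r1) + r2) mod int n)"
  by (simp add: Dc_def)

lemma group_Dc:
  assumes "n > 0" shows "group (Dc n)"
proof (rule groupI)
  fix x y assume "x \<in> carrier (Dc n)" "y \<in> carrier (Dc n)"
  then show "x \<otimes>\<^bsub>Dc n\<^esub> y \<in> carrier (Dc n)" using assms
    by (cases x, cases y) (auto simp: carrier_Dc mult_Dc)
next
  show "\<one>\<^bsub>Dc n\<^esub> \<in> carrier (Dc n)" using assms by (simp add: carrier_Dc one_Dc)
next
  fix x y z assume "x \<in> carrier (Dc n)" "y \<in> carrier (Dc n)" "z \<in> carrier (Dc n)"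
  then show "x \<otimes>\<^bsub>Dc n\<^esub> y \<otimes>\<^bsub>Dc n\<^esub> z = x \<otimes>\<^bsub>Dc n\<^esub> (y \<otimes>\<^bsub>Dc n\<^esub> z)"
    apply (cases x, cases y, cases z)
    apply (auto simp: mult_Dc)
    apply (simp_all add: mod_simps algebra_simps)
    done
next
  fix x assume "x \<in> carrier (Dc n)"
  then show "\<one>\<^bsub>Dc n\<^esub> \<otimes>\<^bsub>Dc n\<^esub> x = x"
    by (cases x) (auto simp: carrier_Dc mult_Dc one_Dc)
next
  fix x assume x: "x \<in> carrier (Dc n)"
  obtain b r where xr: "x = (b, r)" by (cases x)
  let ?y = "(b, if b then r else (- r) mod int n)"
  have "?y \<in> carrier (Dc n)" using x xr assms by (auto simp: carrier_Dc)
  moreover have "?y \<otimes>\<^bsub>Dc n\<^esub> x = \<one>\<^bsub>Dc n\<^esub>"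
    using xr by (auto simp: mult_Dc one_Dc mod_simps)
  ultimately show "\<exists>y\<in>carrier (Dc n). y \<otimes>\<^bsub>Dc n\<^esub> x = \<one>\<^bsub>Dc n\<^esub>" by blast
qed

lemma inv_Dc:
  assumes "n > 0" "(b, r) \<in> carrier (Dc n)"
  shows "inv\<^bsub>Dc n\<^esub> (b, r) = (b, if b then r else (- r) mod int n)"
  using assms by (intro group.inv_equality[OF group_Dc])
     (auto simp: carrier_Dc mult_Dc one_Dc mod_simps)

lemma pow_Dc_t:
  assumes "n > 0"
  shows "(False, 1) [^]\<^bsub>Dc n\<^esub> (k::nat) = (False, int k mod int n)"
proof (induct k)
  case 0 then show ?case using assms by (simp add: one_Dc)
next
  case (Suc k)
  interpret group "Dc n" using group_Dc[OF assms] .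
  show ?case using Suc by (simp add: mult_Dc mod_simps add.commute)
qed

lemma (in group) word_eval_replicate:
  "f x \<in> carrier G \<Longrightarrow> word_eval G f (replicate k (x, True)) = f x [^] k"
proof (induct k)
  case (Suc k)
  then show ?case by (simp add: nat_pow_Suc2[symmetric] del: nat_pow_Suc)
qed simp

definition nfc :: "('a, 'm) monoid_scheme \<Rightarrow> 'a \<Rightarrow> 'a \<Rightarrow> bool \<times> int \<Rightarrow> 'a" where
  "nfc K s t x = (if fst x then s else \<one>\<^bsub>K\<^esub>) \<otimes>\<^bsub>K\<^esub> t [^]\<^bsub>K\<^esub> (nat (snd x))"

locale dgroup = group +
  fixes s t n
  assumes s_c: "s \<in> carrier G" and t_c: "t \<in> carrier G"
    and ss: "s \<otimes> s = \<one>" and tn: "t [^] (n::nat) = \<one>" and stst: "s \<otimes> (t \<otimes> (s \<otimes> t)) = \<one>"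
    and n1: "n > 1"
begin

lemma npos: "n > 0" using n1 by simp

lemma nfc_closed: "nfc G s t x \<in> carrier G"
  using s_c t_c by (simp add: nfc_def)

lemma inv_s: "inv s = s" using ss s_c by (intro inv_equality) auto

lemma inv_t: "inv t = t [^] (n - 1)"
proof (rule inv_equality)
  have "t [^] (n - 1) \<otimes> t = t [^] Suc (n - 1)" by simp
  then show "t [^] (n - 1) \<otimes> t = \<one>" using npos tn by simp
qed (simp_all add: t_c)

lemma ts: "t \<otimes> s = s \<otimes> t [^] (n - 1)"
proof -
  have "(t \<otimes> (s \<otimes> t)) \<otimes> s = \<one>" by (rule inv_comm[OF stst]) (simp_all add: s_c t_c)
  then have "inv s = t \<otimes> (s \<otimes> t)" using s_c t_c by (intro inv_equality) auto
  then have 1: "t \<otimes> (s \<otimes> t) = s" by (simp add: inv_s)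
  have "t \<otimes> s = (t \<otimes> (s \<otimes> t)) \<otimes> inv t" using s_c t_c by (simp add: m_assoc)
  also have "\<dots> = s \<otimes> inv t" using 1 by simp
  finally show ?thesis by (simp add: inv_t)
qed

lemma t_pow_mod: "t [^] (k::nat) = t [^] (k mod n)"
proof -
  have "t [^] k = t [^] (n * (k div n) + k mod n)" by simp
  also have "\<dots> = (t [^] n) [^] (k div n) \<otimes> t [^] (k mod n)"
    using t_c by (simp add: nat_pow_pow nat_pow_mult)
  finally show ?thesis using tn t_c by simp
qed

lemma nf_s:
  assumes "y \<in> carrier (Dc n)"
  shows "nfc G s t ((True, 0) \<otimes>\<^bsub>Dc n\<^esub> y) = s \<otimes> nfc G s t y"
proof -
  obtain b r where y: "y = (b, r)" "0 \<le> r" "r < int n" using assms by (auto simp: carrier_Dc)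
  show ?thesis using y s_c t_c ss
    by (cases b) (auto simp: nfc_def mult_Dc m_assoc[symmetric])
qed

lemma nf_t:
  assumes "y \<in> carrier (Dc n)"
  shows "nfc G s t ((False, 1) \<otimes>\<^bsub>Dc n\<^esub> y) = t \<otimes> nfc G s t y"
proof -
  obtain b r where y: "y = (b, r)" "0 \<le> r" "r < int n" using assms by (auto simp: carrier_Dc)
  show ?thesis
  proof (cases b)
    case False
    have "(1 + r) mod int n = int (Suc (nat r) mod n)" using y by (simp add: zmod_int)
    then have "t [^] nat ((1 + r) mod int n) = t [^] (Suc (nat r))"
      using t_pow_mod by simp
    moreover have "t [^] nat r \<otimes> t = t \<otimes> t [^] nat r"
      using t_c by (metis nat_pow_Suc nat_pow_Suc2)
    ultimately show ?thesis using y False s_c t_c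
      by (simp add: nfc_def mult_Dc)
  next
    case True
    have "(- 1 + r) mod int n = ((r - 1) + int n) mod int n" by (simp only: mod_add_self2) simp
    also have "\<dots> = int ((n - 1 + nat r) mod n)" using y npos
      by (simp add: zmod_int of_nat_diff algebra_simps)
    finally have "(- 1 + r) mod int n = int ((n - 1 + nat r) mod n)" .
    then have "t [^] nat ((- 1 + r) mod int n) = t [^] (n - 1 + nat r)"
      using t_pow_mod by simp
    then have "nfc G s t ((False, 1) \<otimes>\<^bsub>Dc n\<^esub> y) = s \<otimes> (t [^] (n - 1) \<otimes> t [^] nat r)"
      using y True s_c t_c by (simp add: nfc_def mult_Dc nat_pow_mult)
    also have "\<dots> = t \<otimes> (s \<otimes> t [^] nat r)" using ts s_c t_c by (simp flip: m_assoc)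
    finally show ?thesis using y True s_c t_c by (simp add: nfc_def)
  qed
qed

lemma nf_inv:
  assumes "y \<in> carrier (Dc n)" "g \<in> carrier (Dc n)" "gG \<in> carrier G"
    "\<And>z. z \<in> carrier (Dc n) \<Longrightarrow> nfc G s t (g \<otimes>\<^bsub>Dc n\<^esub> z) = gG \<otimes> nfc G s t z"
  shows "nfc G s t (inv\<^bsub>Dc n\<^esub> g \<otimes>\<^bsub>Dc n\<^esub> y) = inv gG \<otimes> nfc G s t y"
proof -
  interpret D: group "Dc n" using group_Dc npos .
  let ?z = "inv\<^bsub>Dc n\<^esub> g \<otimes>\<^bsub>Dc n\<^esub> y"
  have z: "?z \<in> carrier (Dc n)" using assms by simp
  have "g \<otimes>\<^bsub>Dc n\<^esub> ?z = y" using assms by (simp flip: D.m_assoc)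
  then have "nfc G s t y = gG \<otimes> nfc G s t ?z" using assms(4)[OF z] by simp
  then show ?thesis using assms nfc_closed
    by (metis inv_solve_left)
qed

lemma nf_word:
  assumes "w \<in> words_on {S, T}"
  shows "nfc G s t (word_eval (Dc n) (\<lambda>x. if x = S then (True, 0) else (False, 1)) w)
       = word_eval G (\<lambda>x. if x = S then s else t) w"
  using assms
proof (induct w)
  case Nil then show ?case by (simp add: nfc_def one_Dc)
next
  case (Cons l w)
  interpret D: group "Dc n" using group_Dc npos .
  obtain x b where l: "l = (x, b)" by (cases l)
  let ?f = "\<lambda>x. if x = S then (True, 0) else (False, 1::int)"
  have fc: "?f x \<in> carrier (Dc n)" for x using n1 by (auto simp: carrier_Dc)
  have y: "word_eval (Dc n) ?f w \<in> carrier (Dc n)" using fc by (intro D.word_eval_closed) auto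
  have step: "nfc G s t (?f x \<otimes>\<^bsub>Dc n\<^esub> z) = (if x = S then s else t) \<otimes> nfc G s t z"
    if "z \<in> carrier (Dc n)" for z x
    using nf_s[OF that] nf_t[OF that] by auto
  show ?case
  proof (cases b)
    case True then show ?thesis using Cons l step[OF y] by simp
  next
    case False
    have "nfc G s t (inv\<^bsub>Dc n\<^esub> (?f x) \<otimes>\<^bsub>Dc n\<^esub> word_eval (Dc n) ?f w)
        = inv (if x = S then s else t) \<otimes> nfc G s t (word_eval (Dc n) ?f w)"
      using step fc y s_c t_c by (intro nf_inv) auto
    then show ?thesis using Cons l False by simp
  qed
qed

end


definition RD :: "nat \<Rightarrow> dgen word set" where
  "RD n = {[(S, True), (S, True)], replicate n (T, True),
      [(S, True), (T, True), (S, True), (T, True)]}"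

lemma dihedral_eq: "dihedral n = presented_group {S, T} (RD n)"
  by (simp add: dihedral_def RD_def)
lemma dconst_eq: "dconst n c = pres_eq {S, T} (RD n) `` {[(c, True)]}"
  by (simp add: dconst_def RD_def)

lemma words_on_ST[simp]: "w \<in> words_on {S, T}"
proof -
  have "x \<in> {S, T}" for x by (cases x) auto
  then show ?thesis by (auto simp: words_on_def)
qed

lemma group_dih: "group (dihedral n)"
  by (simp add: dihedral_eq group_P)

lemma dconst_carrier: "dconst n c \<in> carrier (dihedral n)"
  by (simp add: dihedral_eq dconst_eq cls_in_carrier)

lemma dih_cls_eval: "pres_eq {S, T} (RD n) `` {w} = word_eval (dihedral n) (dconst n) w"
  using word_eval_P[of w "{S,T}" "RD n"] by (simp add: dihedral_eq dconst_eq[abs_def])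

lemma dih_rel_one: assumes "r \<in> RD n" shows "word_eval (dihedral n) (dconst n) r = \<one>\<^bsub>dihedral n\<^esub>"
proof -
  have "word_eval (dihedral n) (dconst n) r = pres_eq {S,T} (RD n) `` {r}" by (rule dih_cls_eval[symmetric])
  also have "\<dots> = \<one>\<^bsub>presented_group {S,T} (RD n)\<^esub>" by (rule rel_one_P) (simp_all add: assms)
  finally show ?thesis by (simp add: dihedral_eq)
qed

lemma dgroup_dih: "n > 1 \<Longrightarrow> dgroup (dihedral n) (dconst n S) (dconst n T) n"
proof -
  assume n: "n > 1"
  interpret group "dihedral n" by (rule group_dih)
  have c: "dconst n x \<in> carrier (dihedral n)" for x by (rule dconst_carrier)
  show ?thesis
  proof (unfold_locales)
    show "dconst n S \<otimes>\<^bsub>dihedral n\<^esub> dconst n S = \<one>\<^bsub>dihedral n\<^esub>"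
      using dih_rel_one[of "[(S, True), (S, True)]" n] c by (simp add: RD_def)
    show "dconst n T [^]\<^bsub>dihedral n\<^esub> n = \<one>\<^bsub>dihedral n\<^esub>"
      using dih_rel_one[of "replicate n (T, True)" n] c word_eval_replicate[of "dconst n" T n]
      by (simp add: RD_def)
    show "dconst n S \<otimes>\<^bsub>dihedral n\<^esub> (dconst n T \<otimes>\<^bsub>dihedral n\<^esub>
       (dconst n S \<otimes>\<^bsub>dihedral n\<^esub> dconst n T)) = \<one>\<^bsub>dihedral n\<^esub>"
      using dih_rel_one[of "[(S, True), (T, True), (S, True), (T, True)]" n] c by (simp add: RD_def)
  qed (use n c in auto)
qed

definition fD :: "dgen \<Rightarrow> bool \<times> int" where
  "fD x = (if x = S then (True, 0) else (False, 1))"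

definition iota :: "nat \<Rightarrow> dgen word set \<Rightarrow> bool \<times> int" where
  "iota n = lift (Dc n) fD"

lemma fD_carrier: "n > 1 \<Longrightarrow> fD x \<in> carrier (Dc n)"
  by (auto simp: fD_def carrier_Dc)

lemma fD_rel: assumes "n > 1"
  shows "\<forall>r\<in>RD n. r \<in> words_on {S, T} \<longrightarrow> word_eval (Dc n) fD r = \<one>\<^bsub>Dc n\<^esub>"
proof -
  interpret group "Dc n" using group_Dc assms by simp
  have fT: "fD T = (False, 1)" by (simp add: fD_def)
  have "word_eval (Dc n) fD (replicate n (T, True)) = fD T [^]\<^bsub>Dc n\<^esub> n"
    using word_eval_replicate[of fD T n] fD_carrier[OF assms] by blast
  also have "\<dots> = \<one>\<^bsub>Dc n\<^esub>" using pow_Dc_t[of n n] assms fT by (simp add: one_Dc)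
  finally have "word_eval (Dc n) fD (replicate n (T, True)) = \<one>\<^bsub>Dc n\<^esub>" .
  then show ?thesis using assms
    by (auto simp: RD_def fD_def mult_Dc one_Dc)
qed

lemma iota_hom: "n > 1 \<Longrightarrow> iota n \<in> hom (dihedral n) (Dc n)"
  unfolding iota_def dihedral_eq
  by (rule lift_hom) (auto simp: group_Dc fD_carrier fD_rel)

lemma iota_cls: "n > 1 \<Longrightarrow> iota n (pres_eq {S, T} (RD n) `` {w}) = word_eval (Dc n) fD w"
  unfolding iota_def
  by (rule lift_cls) (auto simp: group_Dc fD_carrier fD_rel)

lemma iota_dconst: assumes "n > 1" shows "iota n (dconst n x) = fD x"
proof -
  interpret group "Dc n" using group_Dc assms by simp
  show ?thesis using iota_cls[of n "[(x, True)]"] fD_carrier[of n x] assms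
    by (simp add: dconst_eq)
qed

lemma nfc_iota:
  assumes "n > 1" "C \<in> carrier (dihedral n)"
  shows "nfc (dihedral n) (dconst n S) (dconst n T) (iota n C) = C"
proof -
  interpret dgroup "dihedral n" "dconst n S" "dconst n T" n using dgroup_dih assms by simp
  obtain w where C: "C = pres_eq {S, T} (RD n) `` {w}"
    using assms(2) by (auto simp: dihedral_eq elim: carrier_PE)
  have e: "(\<lambda>x. if x = S then dconst n S else dconst n T) = dconst n"
  proof
    fix x show "(if x = S then dconst n S else dconst n T) = dconst n x" by (cases x) auto
  qed
  have 1: "iota n C = word_eval (Dc n) fD w" using assms(1) by (simp add: C iota_cls)
  have 2: "C = word_eval (dihedral n) (dconst n) w" by (simp add: C dih_cls_eval)
  show ?thesis using nf_word[of w] unfolding 1 by (simp add: 2 fD_def[abs_def] e)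
qed

lemma iota_nfc:
  assumes "n > 1" "x \<in> carrier (Dc n)"
  shows "iota n (nfc (dihedral n) (dconst n S) (dconst n T) x) = x"
proof -
  interpret dgroup "dihedral n" "dconst n S" "dconst n T" n using dgroup_dih assms by simp
  interpret D: group "Dc n" using group_Dc assms by simp
  interpret h: group_hom "dihedral n" "Dc n" "iota n"
    using iota_hom assms by (simp add: group_hom_def group_hom_axioms_def D.is_group)
  obtain b r where x: "x = (b, r)" "0 \<le> r" "r < int n" using assms by (auto simp: carrier_Dc)
  have "iota n (nfc (dihedral n) (dconst n S) (dconst n T) x)
      = (if b then (True, 0) else (False, 0)) \<otimes>\<^bsub>Dc n\<^esub> (False, int (nat r) mod int n)"
    using x s_c t_c assms pow_Dc_t[of n "nat r"]
    by (simp add: nfc_def iota_dconst h.hom_nat_pow fD_def one_Dc)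
  then show ?thesis using x by (simp add: mult_Dc)
qed

lemma nfc_carrier: "n > 1 \<Longrightarrow> nfc (dihedral n) (dconst n S) (dconst n T) x \<in> carrier (dihedral n)"
  using dgroup.nfc_closed[OF dgroup_dih] by blast

lemma iota_inj:
  assumes "n > 1" "C \<in> carrier (dihedral n)" "C' \<in> carrier (dihedral n)" "iota n C = iota n C'"
  shows "C = C'"
  using nfc_iota[OF assms(1,2)] nfc_iota[OF assms(1,3)] assms(4) by metis

lemma iota_surj:
  assumes "n > 1" "x \<in> carrier (Dc n)"
  obtains C where "C \<in> carrier (dihedral n)" "iota n C = x"
  using iota_nfc[OF assms] nfc_carrier[OF assms(1)] by blast


lemma odd_dvd2: assumes "odd n" "int n dvd 2 * x" "\<bar>x\<bar> < int n" shows "x = 0"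
proof -
  obtain c where c: "2 * x = int n * c" using assms(2) by (auto elim: dvdE)
  have "even (int n * c)" using c by (metis dvd_triv_left)
  then have "even c" using assms(1) by simp
  then obtain d where d: "c = 2 * d" by (auto elim: evenE)
  have x: "x = int n * d" using c d by simp
  show ?thesis
  proof (rule ccontr)
    assume "x \<noteq> 0" then have "d \<noteq> 0" using x by simp
    then have "\<bar>int n * d\<bar> \<ge> int n" by (simp add: abs_mult) (smt (verit) mult_le_cancel_left1 of_nat_0_le_iff)
    then show False using assms(3) x by simp
  qed
qed

lemma rot_sq:
  assumes "odd n" "(False, r) \<in> carrier (Dc n)"
    "(False, r) \<otimes>\<^bsub>Dc n\<^esub> (False, r) = \<one>\<^bsub>Dc n\<^esub>"
  shows "r = 0"
proof -
  have "(r + r) mod int n = 0" using assms(3) by (simp add: mult_Dc one_Dc)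
  then have "int n dvd r + r" by (simp add: mod_eq_0_iff_dvd)
  then have "int n dvd 2 * r" by (metis mult_2)
  moreover have "\<bar>r\<bar> < int n" using assms(2) by (auto simp: carrier_Dc)
  ultimately show ?thesis by (rule odd_dvd2[OF assms(1)])
qed

lemma refl_comm:
  assumes "odd n" "(True, a) \<in> carrier (Dc n)" "(True, b) \<in> carrier (Dc n)"
    "(True, a) \<otimes>\<^bsub>Dc n\<^esub> (True, b) = (True, b) \<otimes>\<^bsub>Dc n\<^esub> (True, a)"
  shows "a = b"
proof -
  have "(- a + b) mod int n = (- b + a) mod int n" using assms(4) by (simp add: mult_Dc)
  then have "int n dvd (- a + b) - (- b + a)" by (simp add: mod_eq_dvd_iff)
  then have "int n dvd 2 * (b - a)" by (smt (verit))
  moreover have "\<bar>b - a\<bar> < int n" using assms(2,3) by (auto simp: carrier_Dc)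
  ultimately have "b - a = 0" by (rule odd_dvd2[OF assms(1)])
  then show ?thesis by simp
qed

lemma (in group) sq_pow_odd:
  assumes "x \<in> carrier G" "x \<otimes> x = \<one>" "odd k"
  shows "x [^] (k::nat) = x"
proof -
  obtain j where k: "k = 2 * j + 1" using assms(3) by (auto elim: oddE)
  have "x [^] (2 * j) = (x [^] (2::nat)) [^] j" using assms(1) by (simp add: nat_pow_pow)
  also have "x [^] (2::nat) = \<one>" using assms(1,2) by (simp add: numeral_2_eq_2)
  finally have "x [^] (2 * j) = \<one>" by simp
  then show ?thesis using k assms(1) by simp
qed

lemma (in group) comm_from_commw:
  assumes "a \<in> carrier G" "b \<in> carrier G"
    "a \<otimes> (b \<otimes> (inv a \<otimes> (inv b \<otimes> \<one>))) = \<one>"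
  shows "a \<otimes> b = b \<otimes> a"
proof -
  have "(a \<otimes> b) \<otimes> inv (b \<otimes> a) = \<one>" using assms by (simp add: inv_mult_group m_assoc)
  then show ?thesis using assms by (simp add: inv_solve_right')
qed

lemma (in group) word_eval_in:
  assumes "\<one> \<in> H" "\<And>x y. x \<in> H \<Longrightarrow> y \<in> H \<Longrightarrow> x \<otimes> y \<in> H" "\<And>x. x \<in> H \<Longrightarrow> inv x \<in> H"
    "\<forall>l \<in> set w. f (fst l) \<in> H"
  shows "word_eval G f w \<in> H"
  using assms(4)
proof (induct w)
  case Nil then show ?case using assms(1) by simp
next
  case (Cons l w)
  obtain x b where l: "l = (x, b)" by (cases l)
  have fx: "f x \<in> H" using Cons l by auto
  have "(if b then f x else inv (f x)) \<in> H" using fx assms(3) by simp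
  then show ?case using Cons l assms(2) by simp
qed


definition XG :: "nat \<Rightarrow> nat \<Rightarrow> ogen set" where
  "XG n k = {A, Dg} \<union> Ggens n k"

definition RG :: "nat \<Rightarrow> nat \<Rightarrow> nat \<Rightarrow> (nat \<Rightarrow> eqn) \<Rightarrow> ogen word set" where
  "RG n k m u = {[(A, True), (A, True)], replicate n (Dg, True),
       [(A, True), (Dg, True), (A, True), (Dg, True)]}
      \<union> {tr_word n (u i) | i. i \<in> {1..m}}
      \<union> {commw g g' | g g'. g \<in> Ggens n k \<and> g' \<in> Ggens n k}
      \<union> {commw g A | g. g \<in> Ggens n k}
      \<union> {[(g, True), (g, True)] | g. g \<in> Ggens n k}"

lemma Go_eq: "Go n k m u = presented_group (XG n k) (RG n k m u)"
  by (simp add: Go_def XG_def RG_def)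

definition LA :: "nat \<Rightarrow> ((dgen + nat) \<times> bool) set" where
  "LA k = {(Inl S, True), (Inl T, True), (Inl T, False)} \<union> {(Inr j, b) | j b. 1 \<le> j \<and> j \<le> k}"

lemma Xword_words: "1 \<le> j \<Longrightarrow> j \<le> k \<Longrightarrow> Xword n j \<in> words_on (XG n k)"
  by (auto simp: Xword_def words_on_def XG_def Ggens_def)

lemma tr_letter_words:
  assumes "l \<in> LA k" shows "tr_letter n l \<in> words_on (XG n k)"
proof -
  from assms consider "l = (Inl S, True)" | "l = (Inl T, True)" | "l = (Inl T, False)"
    | j b where "l = (Inr j, b)" "1 \<le> j" "j \<le> k" by (auto simp: LA_def)
  then show ?thesis
  proof cases
    case (4 j b) then show ?thesis using Xword_words[of j k n] by (cases b) auto
  qed (auto simp: XG_def)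
qed

lemma tr_word_words: "set w \<subseteq> LA k \<Longrightarrow> tr_word n w \<in> words_on (XG n k)"
  using tr_letter_words by (force simp: tr_word_def words_on_def)

lemma (in group) letters_eval:
  assumes fc: "\<forall>x \<in> XG n k. f x \<in> carrier G"
    and fA: "F (Inl S) = f A" and fD: "F (Inl T) = f Dg"
    and fX: "\<And>j. 1 \<le> j \<Longrightarrow> j \<le> k \<Longrightarrow> F (Inr j) = word_eval G f (Xword n j)"
    and w: "set w \<subseteq> LA k"
  shows "word_eval G f (tr_word n w) = word_eval G F w"
proof -
  have "(\<forall>l'\<in>set (tr_letter n l). f (fst l') \<in> carrier G) \<and> F (fst l) \<in> carrier G
     \<and> word_eval G f (tr_letter n l) = (if snd l then F (fst l) else inv F (fst l))"
    if l: "l \<in> set w" for l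
  proof -
    have lA: "l \<in> LA k" using w l by auto
    have tw: "tr_letter n l \<in> words_on (XG n k)" using tr_letter_words[OF lA] .
    have 1: "\<forall>l'\<in>set (tr_letter n l). f (fst l') \<in> carrier G" using tw fc by (auto simp: words_on_def)
    have XW: "\<forall>l'\<in>set (Xword n j). f (fst l') \<in> carrier G" if "1 \<le> j" "j \<le> k" for j
      using Xword_words[OF that, of n] fc by (auto simp: words_on_def)
    have A: "f A \<in> carrier G" "f Dg \<in> carrier G" using fc by (auto simp: XG_def)
    have XC: "word_eval G f (Xword n j) \<in> carrier G" if "1 \<le> j" "j \<le> k" for j
      using XW[OF that] by (rule word_eval_closed)
    have 2: "F (fst l) \<in> carrier G"
      using lA A fA fD fX XC by (auto simp: LA_def)
    have 3: "word_eval G f (tr_letter n l) = (if snd l then F (fst l) else inv F (fst l))"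
      using lA A fA fD fX XW by (auto simp: LA_def word_eval_word_inv)
    show ?thesis using 1 2 3 by blast
  qed
  then show ?thesis unfolding tr_word_def by (intro word_eval_concat) blast
qed

lemma Dc_concat:
  assumes "n > 1" "g Dg = (False, 1)" "\<forall>i\<in>set xs. g (G i j) = (c i, 0)"
  shows "word_eval (Dc n) g (concat (map (\<lambda>i. [(G i j, True), (Dg, True), (G i j, False)]) xs))
     = (False, (\<Sum>i\<leftarrow>xs. if c i then -1 else 1) mod int n)"
  using assms(3)
proof (induct xs)
  case Nil then show ?case by (simp add: one_Dc)
next
  case (Cons i xs)
  have iv: "inv\<^bsub>Dc n\<^esub> (c i, 0) = (c i, 0)" using assms(1)
    by (subst inv_Dc) (auto simp: carrier_Dc)
  show ?case using Cons assms(1,2) iv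
    by (cases "c i") (simp_all add: mult_Dc mod_simps algebra_simps)
qed

lemma sum_pm:
  "(\<Sum>i\<leftarrow>[1..<N+1]. if i \<le> q then -1 else (1::int)) = (if N \<le> q then - int N else int N - 2 * int q)"
  by (induct N) auto


lemma q_arith:
  assumes "odd n" "r < n"
  defines "q \<equiv> (if odd r then (n - r) div 2 else n - r div 2)"
  shows "q \<le> n" "(if n \<le> q then - int n else int n - 2 * int q) mod int n = int r"
proof -
  show "q \<le> n" unfolding q_def by auto
  have "int n - 2 * int q = int r \<or> int n - 2 * int q = int r - int n"
    using assms(1,2) unfolding q_def by (auto elim!: oddE evenE) presburger+
  moreover have "(int r - int n) mod int n = int r mod int n"
    by (metis mod_add_self2 diff_add_cancel)
  moreover have "int r mod int n = int r" using assms(2) by simp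
  ultimately have "(int n - 2 * int q) mod int n = int r" by metis
  moreover have "n \<le> q \<Longrightarrow> q = n" using \<open>q \<le> n\<close> by simp
  ultimately show "(if n \<le> q then - int n else int n - 2 * int q) mod int n = int r"
    by (auto simp: mod_pos_pos_trivial)
qed

lemma (in dgroup) commw_s1_aux:
  "a \<in> {s, \<one>} \<Longrightarrow> b \<in> {s, \<one>} \<Longrightarrow> a \<otimes> (b \<otimes> (inv a \<otimes> (inv b \<otimes> \<one>))) = \<one>"
  using s_c ss by (auto simp: inv_s)

lemma (in dgroup) commw_s1:
  "f x \<in> {s, \<one>} \<Longrightarrow> f y \<in> {s, \<one>} \<Longrightarrow> word_eval G f (commw x y) = \<one>"
  using commw_s1_aux[of "f x" "f y"] by (simp add: commw_def)

lemma (in dgroup) sq_s1_aux: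
  "a \<in> {s, \<one>} \<Longrightarrow> a \<otimes> (a \<otimes> \<one>) = \<one>"
  using s_c ss by auto

lemma (in dgroup) sq_s1:
  "f x \<in> {s, \<one>} \<Longrightarrow> word_eval G f [(x, True), (x, True)] = \<one>"
  using sq_s1_aux[of "f x"] by simp

lemma map_ST_eval:
  assumes "group K" "f A = g S" "f Dg = g T"
  shows "word_eval K f (map (\<lambda>(x, b). (if x = S then A else Dg, b)) w) = word_eval K g w"
proof (induct w)
  case (Cons l w)
  obtain x b where l: "l = (x, b)" by (cases l)
  show ?case using Cons l assms by (cases x) auto
qed simp

lemma backward:
  assumes odd: "odd n" and n1: "n > 1" and LAu: "\<forall>i\<in>{1..m}. set (u i) \<subseteq> LA k"
    and hc: "\<forall>j\<in>{1..k}. h j \<in> carrier (dihedral n)" and sol: "is_solution n m u h"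
  shows "\<exists>\<phi>. \<phi> \<in> hom (Go n k m u) (dihedral n) \<and> \<phi> ` carrier (Go n k m u) = carrier (dihedral n)"
proof -
  interpret dgroup "dihedral n" "dconst n S" "dconst n T" n using dgroup_dih n1 by simp
  interpret D: group "Dc n" using group_Dc n1 by simp
  define bj where "bj j = fst (iota n (h j))" for j
  define rj where "rj j = nat (snd (iota n (h j)))" for j
  define qj where "qj j = (if odd (rj j) then (n - rj j) div 2 else n - rj j div 2)" for j
  define fy where "fy x = (case x of A \<Rightarrow> dconst n S | Dg \<Rightarrow> dconst n T
     | G i j \<Rightarrow> if (if i = 0 then bj j else i \<le> qj j) then dconst n S else \<one>\<^bsub>dihedral n\<^esub>)" for x
  have fyc: "fy x \<in> carrier (dihedral n)" for x using s_c t_c by (cases x) (auto simp: fy_def)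
  have fyA: "fy A = dconst n S" and fyD: "fy Dg = dconst n T" by (simp_all add: fy_def)
  have fyG: "fy (G i j) \<in> {dconst n S, \<one>\<^bsub>dihedral n\<^esub>}" for i j by (simp add: fy_def)
  have iota_fy: "iota n (fy x) = (case x of A \<Rightarrow> (True, 0) | Dg \<Rightarrow> (False, 1)
     | G i j \<Rightarrow> (if i = 0 then bj j else i \<le> qj j, 0))" for x
    using iota_dconst[OF n1] iota_hom[OF n1] hom_one[OF iota_hom[OF n1] is_group D.is_group]
    by (cases x) (auto simp: fy_def fD_def one_Dc)
  have Xeval: "word_eval (dihedral n) fy (Xword n j) = h j" if j: "j \<in> {1..k}" for j
  proof -
    have hj: "h j \<in> carrier (dihedral n)" using hc j by blast
    then have ih: "iota n (h j) \<in> carrier (Dc n)" using iota_hom[OF n1] by (auto simp: hom_def)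
    then have ihj: "iota n (h j) = (bj j, int (rj j))" "rj j < n"
      by (auto simp: bj_def rj_def carrier_Dc)
    let ?g = "iota n \<circ> fy"
    have gD: "?g Dg = (False, 1)" by (simp add: iota_fy)
    have gG: "\<forall>i\<in>set [1..<n+1]. ?g (G i j) = ((\<lambda>i. i \<le> qj j) i, 0)"
    proof
      fix i assume "i \<in> set [1..<n+1]"
      then have "i \<noteq> 0" by auto
      then show "?g (G i j) = ((\<lambda>i. i \<le> qj j) i, 0)" by (simp add: iota_fy)
    qed
    have "word_eval (Dc n) ?g (concat (map (\<lambda>i. [(G i j, True), (Dg, True), (G i j, False)]) [1..<n+1]))
       = (False, (\<Sum>i\<leftarrow>[1..<n+1]. if (\<lambda>i. i \<le> qj j) i then -1 else 1) mod int n)"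
      by (rule Dc_concat[OF n1 gD gG])
    also have "\<dots> = (False, int (rj j))"
    proof -
      have qa: "(if n \<le> qj j then - int n else int n - 2 * int (qj j)) mod int n = int (rj j)"
        using q_arith(2)[OF odd ihj(2)] unfolding qj_def .
      show ?thesis by (simp only: sum_pm[where N=n and q="qj j"] qa)
    qed
    finally have c: "word_eval (Dc n) ?g (concat (map (\<lambda>i. [(G i j, True), (Dg, True), (G i j, False)]) [1..<n+1]))
       = (False, int (rj j))" .
    have "iota n (word_eval (dihedral n) fy (Xword n j)) = word_eval (Dc n) ?g (Xword n j)"
      by (rule word_eval_hom) (simp_all add: is_group D.is_group iota_hom[OF n1] fyc)
    also have "\<dots> = (bj j, int (rj j))"
      unfolding Xword_def using c ihj(2) by (simp add: iota_fy mult_Dc)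
    finally have "iota n (word_eval (dihedral n) fy (Xword n j)) = iota n (h j)" using ihj by simp
    then show ?thesis using hj fyc word_eval_closed iota_inj[OF n1] by blast
  qed
  have rel: "\<forall>r\<in>RG n k m u. r \<in> words_on (XG n k) \<longrightarrow> word_eval (dihedral n) fy r = \<one>\<^bsub>dihedral n\<^esub>"
  proof (intro ballI impI)
    fix r assume r: "r \<in> RG n k m u" and rw: "r \<in> words_on (XG n k)"
    show "word_eval (dihedral n) fy r = \<one>\<^bsub>dihedral n\<^esub>"
    proof -
      { assume "r = [(A, True), (A, True)]"
        then have ?thesis using fyA ss s_c by simp }
      moreover
      { assume "r = replicate n (Dg, True)"
        then have ?thesis using word_eval_replicate[of fy Dg n] fyc[of Dg] fyD tn by simp }
      moreover
      { assume "r = [(A, True), (Dg, True), (A, True), (Dg, True)]"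
        then have ?thesis using fyA fyD stst s_c t_c by simp }
      moreover
      { fix i assume i: "i \<in> {1..m}" "r = tr_word n (u i)"
        let ?F = "\<lambda>l. case l of Inl c \<Rightarrow> dconst n c | Inr j \<Rightarrow> h j"
        have "word_eval (dihedral n) fy (tr_word n (u i)) = word_eval (dihedral n) ?F (u i)"
          by (rule letters_eval[where k=k]) (use fyc fyA fyD Xeval LAu i in auto)
        also have "\<dots> = \<one>\<^bsub>dihedral n\<^esub>" using sol i by (simp add: is_solution_def)
        finally have ?thesis using i by simp }
      moreover
      { fix g g' assume "r = commw g g'" "g \<in> Ggens n k" "g' \<in> Ggens n k"
        then have ?thesis using fyG by (auto simp: Ggens_def intro!: commw_s1) }
      moreover
      { fix g assume "r = commw g A" "g \<in> Ggens n k"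
        then have ?thesis using fyG fyA by (auto simp: Ggens_def intro!: commw_s1) }
      moreover
      { fix g assume a: "r = [(g, True), (g, True)]" "g \<in> Ggens n k"
        then obtain i j where "g = G i j" by (auto simp: Ggens_def)
        then have ?thesis using a sq_s1[of fy g] fyG[of i j] by simp }
      ultimately show ?thesis using r unfolding RG_def by blast
    qed
  qed
  have fyX: "\<forall>x\<in>XG n k. fy x \<in> carrier (dihedral n)" using fyc by simp
  let ?phi = "lift (dihedral n) fy"
  have hom: "?phi \<in> hom (Go n k m u) (dihedral n)"
    unfolding Go_eq by (rule lift_hom[OF is_group fyX rel])
  have "carrier (dihedral n) \<subseteq> ?phi ` carrier (Go n k m u)"
  proof
    fix C assume "C \<in> carrier (dihedral n)"
    then obtain w where C: "C = pres_eq {S, T} (RD n) `` {w}"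
      by (auto simp: dihedral_eq elim: carrier_PE)
    let ?w = "map (\<lambda>(x, b). (if x = S then A else Dg, b)) w"
    have w': "?w \<in> words_on (XG n k)" by (auto simp: words_on_def XG_def)
    have "?phi (pres_eq (XG n k) (RG n k m u) `` {?w}) = word_eval (dihedral n) fy ?w"
      by (rule lift_cls[OF is_group fyX rel w'])
    also have "\<dots> = word_eval (dihedral n) (dconst n) w"
      by (rule map_ST_eval[OF is_group fyA fyD])
    also have "\<dots> = C" by (simp add: C dih_cls_eval)
    finally show "C \<in> ?phi ` carrier (Go n k m u)"
      using cls_in_carrier[OF w'] by (force simp: Go_eq)
  qed
  moreover have "?phi ` carrier (Go n k m u) \<subseteq> carrier (dihedral n)"
    using hom by (auto simp: hom_def)
  ultimately show ?thesis using hom by blast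
qed


lemma finite_Dc: "finite (carrier (Dc n))"
proof -
  have "carrier (Dc n) \<subseteq> UNIV \<times> {0..<int n}" by (auto simp: carrier_Dc)
  then show ?thesis by (rule finite_subset) simp
qed

lemma iota_image: "n > 1 \<Longrightarrow> iota n ` carrier (dihedral n) = carrier (Dc n)"
  using iota_hom[of n] iota_surj[of n] by (auto simp: hom_def) (metis image_eqI)

lemma RG_mem:
  "[(A, True), (A, True)] \<in> RG n k m u"
  "replicate n (Dg, True) \<in> RG n k m u"
  "[(A, True), (Dg, True), (A, True), (Dg, True)] \<in> RG n k m u"
  "i \<in> {1..m} \<Longrightarrow> tr_word n (u i) \<in> RG n k m u"
  "g \<in> Ggens n k \<Longrightarrow> g' \<in> Ggens n k \<Longrightarrow> commw g g' \<in> RG n k m u"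
  "g \<in> Ggens n k \<Longrightarrow> commw g A \<in> RG n k m u"
  "g \<in> Ggens n k \<Longrightarrow> [(g, True), (g, True)] \<in> RG n k m u"
  unfolding RG_def by blast+

lemma forward:
  assumes odd: "odd n" and n1: "n > 1" and LAu: "\<forall>i\<in>{1..m}. set (u i) \<subseteq> LA k"
    and hom: "\<phi> \<in> hom (Go n k m u) (dihedral n)"
    and surj: "\<phi> ` carrier (Go n k m u) = carrier (dihedral n)"
  shows "\<exists>h. (\<forall>j\<in>{1..k}. h j \<in> carrier (dihedral n)) \<and> is_solution n m u h"
proof -
  interpret dgroup "dihedral n" "dconst n S" "dconst n T" n using dgroup_dih n1 by simp
  interpret D: group "Dc n" using group_Dc n1 by simp
  let ?P = "presented_group (XG n k) (RG n k m u)"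
  let ?E = "pres_eq (XG n k) (RG n k m u)"
  interpret P: group ?P by (rule group_P)
  have homP: "\<phi> \<in> hom ?P (dihedral n)" using hom by (simp add: Go_eq)
  define psi where "psi = iota n \<circ> \<phi>"
  have psihom: "psi \<in> hom ?P (Dc n)"
    using homP iota_hom[OF n1] by (auto simp: hom_def psi_def Pi_def)
  have psisurj: "psi ` carrier ?P = carrier (Dc n)"
    using surj iota_image[OF n1] unfolding psi_def image_comp[symmetric] by (simp add: Go_eq)
  define pg where "pg x = psi (?E `` {[(x, True)]})" for x
  have pgc: "pg x \<in> carrier (Dc n)" if "x \<in> XG n k" for x
    using psihom cls_in_carrier[of "[(x, True)]" "XG n k" "RG n k m u"] that
    by (auto simp: pg_def hom_def)
  have pcls: "psi (?E `` {w}) = word_eval (Dc n) pg w" if "w \<in> words_on (XG n k)" for w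
    using hom_P_cls[OF D.is_group psihom that] by (simp add: pg_def[abs_def])
  have prel: "word_eval (Dc n) pg r = \<one>\<^bsub>Dc n\<^esub>"
    if "r \<in> RG n k m u" "r \<in> words_on (XG n k)" for r
  proof -
    have "word_eval (Dc n) pg r = psi (?E `` {r})" using pcls that by simp
    also have "\<dots> = psi \<one>\<^bsub>?P\<^esub>" using rel_one_P[OF that] by simp
    also have "\<dots> = \<one>\<^bsub>Dc n\<^esub>" by (rule hom_one[OF psihom P.is_group D.is_group])
    finally show ?thesis .
  qed
  have surjw: "\<exists>w\<in>words_on (XG n k). y = word_eval (Dc n) pg w" if "y \<in> carrier (Dc n)" for y
  proof -
    have "y \<in> psi ` carrier ?P" using that psisurj by simp
    then obtain C where C: "y = psi C" "C \<in> carrier ?P" by (rule imageE)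
    obtain w where w: "w \<in> words_on (XG n k)" "C = ?E `` {w}" using C(2) by (rule carrier_PE)
    have "y = word_eval (Dc n) pg w" using pcls[OF w(1)] w(2) C(1) by simp
    then show ?thesis using w(1) by blast
  qed
  have XA: "A \<in> XG n k" "Dg \<in> XG n k" by (auto simp: XG_def)
  have XGg: "g \<in> Ggens n k \<Longrightarrow> g \<in> XG n k" for g by (auto simp: XG_def)
  define \<alpha> where "\<alpha> = pg A"
  define \<delta> where "\<delta> = pg Dg"
  have \<alpha>c: "\<alpha> \<in> carrier (Dc n)" and \<delta>c: "\<delta> \<in> carrier (Dc n)" using pgc XA by (auto simp: \<alpha>_def \<delta>_def)
  have F1: "\<alpha> \<otimes>\<^bsub>Dc n\<^esub> \<alpha> = \<one>\<^bsub>Dc n\<^esub>"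
    using prel[OF RG_mem(1)] XA \<alpha>c by (simp add: \<alpha>_def)
  have F2: "\<delta> [^]\<^bsub>Dc n\<^esub> n = \<one>\<^bsub>Dc n\<^esub>"
    using prel[OF RG_mem(2)] XA \<delta>c D.word_eval_replicate[of pg Dg n]
    by (simp add: \<delta>_def words_on_def)
  have F3: "\<alpha> \<otimes>\<^bsub>Dc n\<^esub> (\<delta> \<otimes>\<^bsub>Dc n\<^esub> (\<alpha> \<otimes>\<^bsub>Dc n\<^esub> \<delta>)) = \<one>\<^bsub>Dc n\<^esub>"
    using prel[OF RG_mem(3)] XA \<alpha>c \<delta>c
    by (simp add: \<alpha>_def \<delta>_def)
  have F4: "pg g \<otimes>\<^bsub>Dc n\<^esub> pg g = \<one>\<^bsub>Dc n\<^esub>" if "g \<in> Ggens n k" for g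
    using prel[OF RG_mem(7)[OF that]] that XGg[OF that] pgc[OF XGg[OF that]]
    by simp
  have F5: "pg g \<otimes>\<^bsub>Dc n\<^esub> \<alpha> = \<alpha> \<otimes>\<^bsub>Dc n\<^esub> pg g" if "g \<in> Ggens n k" for g
  proof (rule D.comm_from_commw)
    show "pg g \<in> carrier (Dc n)" "\<alpha> \<in> carrier (Dc n)" using pgc XGg that \<alpha>c by auto
    show "pg g \<otimes>\<^bsub>Dc n\<^esub> (\<alpha> \<otimes>\<^bsub>Dc n\<^esub> (inv\<^bsub>Dc n\<^esub> pg g \<otimes>\<^bsub>Dc n\<^esub> (inv\<^bsub>Dc n\<^esub> \<alpha> \<otimes>\<^bsub>Dc n\<^esub> \<one>\<^bsub>Dc n\<^esub>))) = \<one>\<^bsub>Dc n\<^esub>"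
      using prel[OF RG_mem(6)[OF that]] that XGg[OF that] XA by (simp add: commw_def \<alpha>_def)
  qed
  have F6: "pg g \<otimes>\<^bsub>Dc n\<^esub> pg g' = pg g' \<otimes>\<^bsub>Dc n\<^esub> pg g" if "g \<in> Ggens n k" "g' \<in> Ggens n k" for g g'
  proof (rule D.comm_from_commw)
    show "pg g \<in> carrier (Dc n)" "pg g' \<in> carrier (Dc n)" using pgc XGg that by auto
    show "pg g \<otimes>\<^bsub>Dc n\<^esub> (pg g' \<otimes>\<^bsub>Dc n\<^esub> (inv\<^bsub>Dc n\<^esub> pg g \<otimes>\<^bsub>Dc n\<^esub> (inv\<^bsub>Dc n\<^esub> pg g' \<otimes>\<^bsub>Dc n\<^esub> \<one>\<^bsub>Dc n\<^esub>))) = \<one>\<^bsub>Dc n\<^esub>"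
      using prel[OF RG_mem(5)[OF that]] that XGg[OF that(1)] XGg[OF that(2)] by (simp add: commw_def)
  qed
  have tc: "(False, 1) \<in> carrier (Dc n)" using n1 by (simp add: carrier_Dc)
  have rot1: "y = \<one>\<^bsub>Dc n\<^esub>" if yc: "y \<in> carrier (Dc n)" and yf: "\<not> fst y"
    and yy: "y \<otimes>\<^bsub>Dc n\<^esub> y = \<one>\<^bsub>Dc n\<^esub>" for y
  proof -
    obtain r where y: "y = (False, r)" using yf by (cases y) auto
    then have "r = 0" using rot_sq[OF odd] yc yy by simp
    then show ?thesis using y by (simp add: one_Dc)
  qed
  have reflc: "y = y'" if yc: "y \<in> carrier (Dc n)" and yc': "y' \<in> carrier (Dc n)"
    and yf: "fst y" and yf': "fst y'"
    and yy: "y \<otimes>\<^bsub>Dc n\<^esub> y' = y' \<otimes>\<^bsub>Dc n\<^esub> y" for y y'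
  proof -
    obtain c c' where y: "y = (True, c)" "y' = (True, c')" using yf yf'
      by (cases y, cases y') auto
    then show ?thesis using refl_comm[OF odd] yc yc' yy by simp
  qed
  have one_ne: "\<not> fst (\<one>\<^bsub>Dc n\<^esub>)" by (simp add: one_Dc)
  have \<alpha>T: "fst \<alpha>"
  proof (rule ccontr)
    assume nf: "\<not> fst \<alpha>"
    have \<alpha>1: "\<alpha> = \<one>\<^bsub>Dc n\<^esub>" using rot1[OF \<alpha>c nf F1] .
    have \<delta>\<delta>: "\<delta> \<otimes>\<^bsub>Dc n\<^esub> \<delta> = \<one>\<^bsub>Dc n\<^esub>" using F3 \<alpha>1 \<delta>c by simp
    have "\<not> fst \<delta>"
    proof
      assume "fst \<delta>"
      moreover have "\<delta> [^]\<^bsub>Dc n\<^esub> n = \<delta>" using D.sq_pow_odd[OF \<delta>c \<delta>\<delta> odd] .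
      ultimately show False using F2 one_ne by simp
    qed
    then have \<delta>1: "\<delta> = \<one>\<^bsub>Dc n\<^esub>" using rot1[OF \<delta>c _ \<delta>\<delta>] by simp
    obtain \<sigma> where \<sigma>c: "\<sigma> \<in> carrier (Dc n)" and \<sigma>\<sigma>: "\<sigma> \<otimes>\<^bsub>Dc n\<^esub> \<sigma> = \<one>\<^bsub>Dc n\<^esub>"
      and \<sigma>all: "\<forall>x\<in>XG n k. pg x = \<one>\<^bsub>Dc n\<^esub> \<or> pg x = \<sigma>"
    proof (cases "\<forall>g\<in>Ggens n k. pg g = \<one>\<^bsub>Dc n\<^esub>")
      case True
      then show ?thesis using that[of "\<one>\<^bsub>Dc n\<^esub>"] \<alpha>1 \<delta>1
        by (auto simp: XG_def \<alpha>_def \<delta>_def)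
    next
      case False
      then obtain g0 where g0: "g0 \<in> Ggens n k" "pg g0 \<noteq> \<one>\<^bsub>Dc n\<^esub>" by blast
      have g0c: "pg g0 \<in> carrier (Dc n)" using pgc XGg g0 by auto
      have g0T: "fst (pg g0)" using rot1[OF g0c _ F4[OF g0(1)]] g0 by blast
      have "\<forall>x\<in>XG n k. pg x = \<one>\<^bsub>Dc n\<^esub> \<or> pg x = pg g0"
      proof
        fix x assume x: "x \<in> XG n k"
        show "pg x = \<one>\<^bsub>Dc n\<^esub> \<or> pg x = pg g0"
        proof (cases "x \<in> Ggens n k")
          case True
          have xc: "pg x \<in> carrier (Dc n)" using pgc x by auto
          show ?thesis
          proof (cases "fst (pg x)")
            case True
            then show ?thesis using reflc[OF xc g0c True g0T F6[OF \<open>x \<in> Ggens n k\<close> g0(1)]] by blast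
          next
            case False
            then show ?thesis using rot1[OF xc False F4[OF \<open>x \<in> Ggens n k\<close>]] by blast
          qed
        next
          case False
          then have "x = A \<or> x = Dg" using x by (auto simp: XG_def)
          then show ?thesis using \<alpha>1 \<delta>1 by (auto simp: \<alpha>_def \<delta>_def)
        qed
      qed
      then show ?thesis using that[OF g0c F4[OF g0(1)]] by blast
    qed
    have inv\<sigma>: "inv\<^bsub>Dc n\<^esub> \<sigma> = \<sigma>" using \<sigma>c \<sigma>\<sigma> by (intro D.inv_equality) auto
    let ?H = "{\<one>\<^bsub>Dc n\<^esub>, \<sigma>}"
    obtain w where w: "w \<in> words_on (XG n k)" "(False, 1) = word_eval (Dc n) pg w"
      using surjw[OF tc] by blast
    have "word_eval (Dc n) pg w \<in> ?H"
    proof (rule D.word_eval_in)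
      show "\<one>\<^bsub>Dc n\<^esub> \<in> ?H" by simp
      show "x \<otimes>\<^bsub>Dc n\<^esub> y \<in> ?H" if "x \<in> ?H" "y \<in> ?H" for x y
        using that \<sigma>c \<sigma>\<sigma> by auto
      show "inv\<^bsub>Dc n\<^esub> x \<in> ?H" if "x \<in> ?H" for x using that inv\<sigma> by auto
      show "\<forall>l\<in>set w. pg (fst l) \<in> ?H" using w(1) \<sigma>all by (auto simp: words_on_def)
    qed
    then have "(False, 1) = \<one>\<^bsub>Dc n\<^esub> \<or> (False, 1) = \<sigma>" using w by simp
    moreover have "(False, 1::int) \<noteq> \<one>\<^bsub>Dc n\<^esub>" by (simp add: one_Dc)
    moreover have "(False, 1::int) \<noteq> \<sigma>"
    proof
      assume "(False, 1) = \<sigma>"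
      then have "(1::int) = 0" using rot_sq[OF odd tc] \<sigma>\<sigma> by simp
      then show False by simp
    qed
    ultimately show False by blast
  qed
  have \<delta>F: "\<not> fst \<delta>"
  proof
    assume \<delta>T: "fst \<delta>"
    obtain a d where ad: "\<alpha> = (True, a)" "\<delta> = (True, d)" using \<alpha>T \<delta>T by (cases \<alpha>, cases \<delta>) auto
    let ?\<rho> = "\<alpha> \<otimes>\<^bsub>Dc n\<^esub> \<delta>"
    have \<rho>c: "?\<rho> \<in> carrier (Dc n)" using \<alpha>c \<delta>c by simp
    have \<rho>F: "\<not> fst ?\<rho>" using ad by (simp add: mult_Dc)
    have "?\<rho> \<otimes>\<^bsub>Dc n\<^esub> ?\<rho> = \<one>\<^bsub>Dc n\<^esub>" using F3 \<alpha>c \<delta>c by (simp add: D.m_assoc)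
    then have "?\<rho> = \<one>\<^bsub>Dc n\<^esub>" using rot1[OF \<rho>c \<rho>F] by simp
    then have "\<alpha> \<otimes>\<^bsub>Dc n\<^esub> \<delta> = \<alpha> \<otimes>\<^bsub>Dc n\<^esub> \<alpha>" using F1 by simp
    then have \<delta>\<alpha>: "\<delta> = \<alpha>" using \<alpha>c \<delta>c by simp
    have "\<delta> [^]\<^bsub>Dc n\<^esub> n = \<delta>" using D.sq_pow_odd[OF \<delta>c _ odd] F1 \<delta>\<alpha> by simp
    then show False using F2 one_ne \<delta>T by simp
  qed
  have \<sigma>g: "pg g = \<one>\<^bsub>Dc n\<^esub> \<or> pg g = \<alpha>" if "g \<in> Ggens n k" for g
  proof -
    have gc: "pg g \<in> carrier (Dc n)" using pgc XGg that by auto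
    show ?thesis
    proof (cases "fst (pg g)")
      case True then show ?thesis using reflc[OF gc \<alpha>c True \<alpha>T F5[OF that]] by blast
    next
      case False then show ?thesis using rot1[OF gc False F4[OF that]] by blast
    qed
  qed
  define f\<theta> where "f\<theta> x = (if x = S then \<alpha> else \<delta>)" for x
  have f\<theta>c: "\<forall>x\<in>{S, T}. f\<theta> x \<in> carrier (Dc n)" using \<alpha>c \<delta>c by (simp add: f\<theta>_def)
  have rel\<theta>: "\<forall>r\<in>RD n. r \<in> words_on {S, T} \<longrightarrow> word_eval (Dc n) f\<theta> r = \<one>\<^bsub>Dc n\<^esub>"
    using F1 F2 F3 \<alpha>c \<delta>c D.word_eval_replicate[of f\<theta> T n]
    by (auto simp: RD_def f\<theta>_def)
  define \<theta> where "\<theta> = lift (Dc n) f\<theta>"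
  have \<theta>hom: "\<theta> \<in> hom (dihedral n) (Dc n)"
    unfolding \<theta>_def dihedral_eq by (rule lift_hom[OF D.is_group f\<theta>c rel\<theta>])
  interpret th: group_hom "dihedral n" "Dc n" \<theta>
    using \<theta>hom by (simp add: group_hom_def group_hom_axioms_def is_group D.is_group)
  have \<theta>d: "\<theta> (dconst n x) = f\<theta> x" for x
    using lift_cls[OF D.is_group f\<theta>c rel\<theta>, of "[(x, True)]"] f\<theta>c
    by (cases x) (auto simp: \<theta>_def dconst_eq)
  have sub: "subgroup (\<theta> ` carrier (dihedral n)) (Dc n)" by (rule th.img_is_subgroup)
  have pgIm: "pg x \<in> \<theta> ` carrier (dihedral n)" if "x \<in> XG n k" for x
  proof -
    have "\<alpha> \<in> \<theta> ` carrier (dihedral n)" using \<theta>d[of S] s_c by (force simp: f\<theta>_def)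
    moreover have "\<delta> \<in> \<theta> ` carrier (dihedral n)" using \<theta>d[of T] t_c by (force simp: f\<theta>_def)
    moreover have "\<one>\<^bsub>Dc n\<^esub> \<in> \<theta> ` carrier (dihedral n)" using th.hom_one by force
    moreover have "x = A \<or> x = Dg \<or> x \<in> Ggens n k" using that by (auto simp: XG_def)
    ultimately show ?thesis using \<sigma>g[of x] unfolding \<alpha>_def \<delta>_def by metis
  qed
  have \<theta>surj: "\<theta> ` carrier (dihedral n) = carrier (Dc n)"
  proof
    show "\<theta> ` carrier (dihedral n) \<subseteq> carrier (Dc n)" by auto
    show "carrier (Dc n) \<subseteq> \<theta> ` carrier (dihedral n)"
    proof
      fix y assume "y \<in> carrier (Dc n)"
      then obtain w where w: "w \<in> words_on (XG n k)" "y = word_eval (Dc n) pg w" using surjw by blast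
      show "y \<in> \<theta> ` carrier (dihedral n)" unfolding w(2)
      proof (rule D.word_eval_in)
        show "\<one>\<^bsub>Dc n\<^esub> \<in> \<theta> ` carrier (dihedral n)" using subgroup.one_closed[OF sub] .
        show "x \<otimes>\<^bsub>Dc n\<^esub> y \<in> \<theta> ` carrier (dihedral n)"
          if "x \<in> \<theta> ` carrier (dihedral n)" "y \<in> \<theta> ` carrier (dihedral n)" for x y
          using subgroup.m_closed[OF sub that] .
        show "inv\<^bsub>Dc n\<^esub> x \<in> \<theta> ` carrier (dihedral n)" if "x \<in> \<theta> ` carrier (dihedral n)" for x
          using subgroup.m_inv_closed[OF sub that] .
        show "\<forall>l\<in>set w. pg (fst l) \<in> \<theta> ` carrier (dihedral n)"
          using w(1) pgIm by (auto simp: words_on_def)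
      qed
    qed
  qed
  have inj_iota: "inj_on (iota n) (carrier (dihedral n))"
    using iota_inj[OF n1] by (auto simp: inj_on_def)
  have fin: "finite (carrier (dihedral n))"
    using finite_imageD[OF _ inj_iota] iota_image[OF n1] finite_Dc by simp
  have cards: "card (carrier (dihedral n)) = card (carrier (Dc n))"
    using card_image[OF inj_iota] iota_image[OF n1] by simp
  have inj\<theta>: "inj_on \<theta> (carrier (dihedral n))"
    using eq_card_imp_inj_on[OF fin, of \<theta>] \<theta>surj cards by simp
  define h where "h j = inv_into (carrier (dihedral n)) \<theta> (psi (?E `` {Xword n j}))" for j
  have hprop: "h j \<in> carrier (dihedral n) \<and> \<theta> (h j) = psi (?E `` {Xword n j})" if "j \<in> {1..k}" for j
  proof -
    have "Xword n j \<in> words_on (XG n k)" using that Xword_words by auto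
    then have "psi (?E `` {Xword n j}) \<in> carrier (Dc n)"
      using cls_in_carrier psihom by (force simp: hom_def)
    then have "psi (?E `` {Xword n j}) \<in> \<theta> ` carrier (dihedral n)" using \<theta>surj by simp
    then show ?thesis by (simp add: h_def inv_into_into f_inv_into_f)
  qed
  have "is_solution n m u h"
    unfolding is_solution_def
  proof
    fix i assume i: "i \<in> {1..m}"
    let ?F = "\<lambda>l. case l of Inl c \<Rightarrow> dconst n c | Inr j \<Rightarrow> h j"
    have ui: "set (u i) \<subseteq> LA k" using LAu i by blast
    have Fc: "\<forall>l\<in>set (u i). ?F (fst l) \<in> carrier (dihedral n)"
      using ui hprop dconst_carrier by (auto simp: LA_def)
    have we: "word_eval (dihedral n) ?F (u i) \<in> carrier (dihedral n)"
      using Fc by (rule word_eval_closed)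
    have "\<theta> (word_eval (dihedral n) ?F (u i)) = word_eval (Dc n) (\<theta> \<circ> ?F) (u i)"
      by (rule word_eval_hom[OF is_group D.is_group \<theta>hom Fc])
    also have "\<dots> = word_eval (Dc n) pg (tr_word n (u i))"
    proof (rule D.letters_eval[where k=k, symmetric])
      show "\<forall>x\<in>XG n k. pg x \<in> carrier (Dc n)" using pgc by blast
      show "(\<theta> \<circ> ?F) (Inl S) = pg A" using \<theta>d by (simp add: f\<theta>_def \<alpha>_def)
      show "(\<theta> \<circ> ?F) (Inl T) = pg Dg" using \<theta>d by (simp add: f\<theta>_def \<delta>_def)
      show "(\<theta> \<circ> ?F) (Inr j) = word_eval (Dc n) pg (Xword n j)" if "1 \<le> j" "j \<le> k" for j
        using hprop[of j] that pcls Xword_words[OF that] by simp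
      show "set (u i) \<subseteq> LA k" by (rule ui)
    qed
    also have "\<dots> = \<one>\<^bsub>Dc n\<^esub>"
      using prel[OF RG_mem(4)[OF i] tr_word_words[OF ui]] .
    also have "\<dots> = \<theta> \<one>\<^bsub>dihedral n\<^esub>" by simp
    finally show "word_eval (dihedral n) ?F (u i) = \<one>\<^bsub>dihedral n\<^esub>"
      using inj_onD[OF inj\<theta> _ we one_closed] by blast
  qed
  then show ?thesis using hprop by blast
qed

theorem lemma7p10:
  fixes n k m :: nat and u :: "nat \<Rightarrow> eqn"
  assumes "odd n" and "n > 1"
    and "\<forall>i \<in> {1..m}. set (u i) \<subseteq>
           {(Inl S, True), (Inl T, True), (Inl T, False)} \<union> {(Inr j, b) | j b. 1 \<le> j \<and> j \<le> k}"
  shows "(\<exists>\<phi>. \<phi> \<in> hom (Go n k m u) (dihedral n) \<and> \<phi> ` carrier (Go n k m u) = carrier (dihedral n))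
     \<longleftrightarrow> (\<exists>h. (\<forall>j \<in> {1..k}. h j \<in> carrier (dihedral n)) \<and> is_solution n m u h)"
proof -
  have LAu: "\<forall>i\<in>{1..m}. set (u i) \<subseteq> LA k" using assms(3) unfolding LA_def .
  show ?thesis
  proof
    assume "\<exists>\<phi>. \<phi> \<in> hom (Go n k m u) (dihedral n) \<and> \<phi> ` carrier (Go n k m u) = carrier (dihedral n)"
    then obtain \<phi> where "\<phi> \<in> hom (Go n k m u) (dihedral n)" "\<phi> ` carrier (Go n k m u) = carrier (dihedral n)"
      by blast
    then show "\<exists>h. (\<forall>j \<in> {1..k}. h j \<in> carrier (dihedral n)) \<and> is_solution n m u h"
      by (rule forward[OF assms(1,2) LAu])
  next
    assume "\<exists>h. (\<forall>j \<in> {1..k}. h j \<in> carrier (dihedral n)) \<and> is_solution n m u h"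
    then obtain h where "\<forall>j \<in> {1..k}. h j \<in> carrier (dihedral n)" "is_solution n m u h" by blast
    then show "\<exists>\<phi>. \<phi> \<in> hom (Go n k m u) (dihedral n) \<and> \<phi> ` carrier (Go n k m u) = carrier (dihedral n)"
      by (rule backward[OF assms(1,2) LAu])
  qed
qed

end
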